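(* Let $n$ be a positive even integer and let $G$ be a $2r$-regular graph ($r\ge1$) of order $m$ with chromatic number $3$, having a proper $3$-coloring such that for each vertex $v$, $N(v)$ can be partitioned into two monochromatic subsets, each of size $r$, of two different colors. Then $\chi_{ld}(G[\overline{K_{n}}]) = 3$.
   Context: All graphs are finite, simple and undirected. For a graph $G=(V,E)$ of order $N$ without isolated vertices, a bijection $f\colon V\to\{1,2,\dots,N\}$ is a local distance antimagic labeling if $w(u)\neq w(v)$ for every edge $uv$, where $w(u)=\sum_{x\in N(u)}f(x)$ and $N(u)$ is the open neighborhood of $u$. $\chi_{ld}(G)$ is the minimum number of distinct weights over all local distance antimagic labelings of $G$. $\overline{K_n}$ is the edgeless graph on $n$ vertices. The lexicographic product $G[H]$ has vertex set $V(G)\times V(H)$, with $(g,h)$ adjacent to $(g',h')$ iff $gg'\in E(G)$, or $g=g'$ and $hh'\in E(H)$. *)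

theory Defs
  imports Main
begin

definition simple_graph :: "'a set \<Rightarrow> ('a \<Rightarrow> 'a \<Rightarrow> bool) \<Rightarrow> bool" where
  "simple_graph V E \<longleftrightarrow> finite V \<and> (\<forall>u v. E u v \<longrightarrow> u \<in> V \<and> v \<in> V)
     \<and> (\<forall>u v. E u v \<longrightarrow> E v u) \<and> (\<forall>u. \<not> E u u)"

definition nbhd :: "'a set \<Rightarrow> ('a \<Rightarrow> 'a \<Rightarrow> bool) \<Rightarrow> 'a \<Rightarrow> 'a set" where
  "nbhd V E u = {x \<in> V. E u x}"

definition no_isolated :: "'a set \<Rightarrow> ('a \<Rightarrow> 'a \<Rightarrow> bool) \<Rightarrow> bool" where
  "no_isolated V E \<longleftrightarrow> (\<forall>u\<in>V. nbhd V E u \<noteq> {})"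

definition regular :: "'a set \<Rightarrow> ('a \<Rightarrow> 'a \<Rightarrow> bool) \<Rightarrow> nat \<Rightarrow> bool" where
  "regular V E d \<longleftrightarrow> (\<forall>u\<in>V. card (nbhd V E u) = d)"

definition proper_coloring :: "'a set \<Rightarrow> ('a \<Rightarrow> 'a \<Rightarrow> bool) \<Rightarrow> ('a \<Rightarrow> nat) \<Rightarrow> nat \<Rightarrow> bool" where
  "proper_coloring V E c k \<longleftrightarrow> (\<forall>v\<in>V. c v < k) \<and> (\<forall>u v. E u v \<longrightarrow> c u \<noteq> c v)"

definition chromatic_number :: "'a set \<Rightarrow> ('a \<Rightarrow> 'a \<Rightarrow> bool) \<Rightarrow> nat" where
  "chromatic_number V E = (LEAST k. \<exists>c. proper_coloring V E c k)"

definition weight :: "'a set \<Rightarrow> ('a \<Rightarrow> 'a \<Rightarrow> bool) \<Rightarrow> ('a \<Rightarrow> nat) \<Rightarrow> 'a \<Rightarrow> nat" where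
  "weight V E f u = (\<Sum>x\<in>nbhd V E u. f x)"

definition ld_antimagic :: "'a set \<Rightarrow> ('a \<Rightarrow> 'a \<Rightarrow> bool) \<Rightarrow> ('a \<Rightarrow> nat) \<Rightarrow> bool" where
  "ld_antimagic V E f \<longleftrightarrow> bij_betw f V {1..card V}
     \<and> (\<forall>u v. E u v \<longrightarrow> weight V E f u \<noteq> weight V E f v)"

definition chi_ld :: "'a set \<Rightarrow> ('a \<Rightarrow> 'a \<Rightarrow> bool) \<Rightarrow> nat" where
  "chi_ld V E = Min {card (weight V E f ` V) | f. ld_antimagic V E f}"

definition lex_V :: "'a set \<Rightarrow> 'b set \<Rightarrow> ('a \<times> 'b) set" where
  "lex_V VG VH = VG \<times> VH"

definition lex_E :: "('a \<Rightarrow> 'a \<Rightarrow> bool) \<Rightarrow> ('b \<Rightarrow> 'b \<Rightarrow> bool) \<Rightarrow> 'a \<times> 'b \<Rightarrow> 'a \<times> 'b \<Rightarrow> bool" where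
  "lex_E EG EH p q \<longleftrightarrow> EG (fst p) (fst q) \<or> (fst p = fst q \<and> EH (snd p) (snd q))"

definition empty_V :: "nat \<Rightarrow> nat set" where "empty_V n = {0..<n}"
definition empty_E :: "nat \<Rightarrow> nat \<Rightarrow> bool" where "empty_E u v = False"

end

theory Submission
  imports Defs
begin

lemma nbhd_lex:
  "nbhd (lex_V V (empty_V n)) (lex_E E empty_E) (v,i) = nbhd V E v \<times> {0..<n}"
  by (auto simp: nbhd_def lex_V_def lex_E_def empty_E_def empty_V_def)

lemma weight_lex:
  "weight (lex_V V (empty_V n)) (lex_E E empty_E) f (v,i) = (\<Sum>u\<in>nbhd V E v. \<Sum>j\<in>{0..<n}. f (u,j))"
  unfolding weight_def nbhd_lex by (simp add: sum.cartesian_product)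

lemma lower_bound:
  assumes sg: "simple_graph V E" and n: "n > 0"
    and ld: "ld_antimagic (lex_V V (empty_V n)) (lex_E E empty_E) f"
  shows "chromatic_number V E \<le> card (weight (lex_V V (empty_V n)) (lex_E E empty_E) f ` lex_V V (empty_V n))"
proof -
  let ?V = "lex_V V (empty_V n)" and ?E = "lex_E E empty_E"
  let ?W = "weight ?V ?E f"
  let ?K = "?W ` ?V"
  have finV: "finite V" using sg by (simp add: simple_graph_def)
  have "finite ?V" using finV by (simp add: lex_V_def empty_V_def)
  hence finK: "finite ?K" by simp
  obtain h where h: "bij_betw h ?K {0..<card ?K}" using ex_bij_betw_finite_nat[OF finK] by blast
  define col where "col v = h (?W (v,0))" for v
  have inV: "(v,0) \<in> ?V" if "v \<in> V" for v using that n by (simp add: lex_V_def empty_V_def)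
  have "proper_coloring V E col (card ?K)"
    unfolding proper_coloring_def
  proof safe
    fix v assume "v \<in> V"
    then have "?W (v,0) \<in> ?K" using inV by blast
    then show "col v < card ?K" unfolding col_def using h by (auto simp: bij_betw_def)
  next
    fix u v assume e: "E u v" and eq: "col u = col v"
    have uv: "u \<in> V" "v \<in> V" using e sg by (auto simp: simple_graph_def)
    have "?E (u,0) (v,0)" using e by (simp add: lex_E_def)
    hence ne: "?W (u,0) \<noteq> ?W (v,0)" using ld by (simp add: ld_antimagic_def)
    have "?W (u,0) \<in> ?K" "?W (v,0) \<in> ?K" using inV uv by blast+
    with h eq ne show False unfolding col_def bij_betw_def inj_on_def by blast
  qed
  thus ?thesis unfolding chromatic_number_def by - (rule Least_le, blast)
qed

lemma block_bij:
  fixes c :: "'a \<Rightarrow> nat"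
  assumes finV: "finite V"
    and e: "\<forall>i. bij_betw (e i) {u\<in>V. c u = i} {0..<card {u\<in>V. c u = i}}"
    and disj: "\<forall>u\<in>V. \<forall>u'\<in>V. \<forall>x y. x < card {w\<in>V. c w = c u} \<longrightarrow> y < card {w\<in>V. c w = c u'}
        \<longrightarrow> off (c u) + x = off (c u') + y \<longrightarrow> c u = c u'"
    and cont: "\<forall>u\<in>V. off (c u) + card {w\<in>V. c w = c u} \<le> card V"
  shows "bij_betw (\<lambda>u. off (c u) + e (c u) u) V {0..<card V}"
proof -
  let ?g = "\<lambda>u. off (c u) + e (c u) u"
  have lt: "e (c u) u < card {w\<in>V. c w = c u}" if "u \<in> V" for u
    using e[rule_format, of "c u"] that by (auto simp: bij_betw_def)
  have inj: "inj_on ?g V"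
  proof (rule inj_onI)
    fix u u' assume u: "u \<in> V" and u': "u' \<in> V" and eq: "?g u = ?g u'"
    have cc: "c u = c u'" using disj u u' lt[OF u] lt[OF u'] eq by blast
    hence "e (c u) u = e (c u) u'" using eq by simp
    moreover have "inj_on (e (c u)) {w\<in>V. c w = c u}" using e by (auto simp: bij_betw_def)
    ultimately show "u = u'" using u u' cc by (auto simp: inj_on_def)
  qed
  have sub: "?g ` V \<subseteq> {0..<card V}"
  proof
    fix x assume "x \<in> ?g ` V"
    then obtain u where u: "u \<in> V" "x = ?g u" by blast
    show "x \<in> {0..<card V}" using lt[OF u(1)] cont u by force
  qed
  have "card (?g ` V) = card {0..<card V}" using card_image[OF inj] by simp
  hence "?g ` V = {0..<card V}" using sub by (simp add: card_subset_eq)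
  thus ?thesis using inj by (simp add: bij_betw_def)
qed

lemma divlem:
  fixes j j' x y m :: nat
  assumes "x < m" "y < m" "j*m + x = j'*m + y"
  shows "j = j' \<and> x = y"
proof -
  have "(j*m + x) div m = j" using assms(1) by simp
  moreover have "(j'*m + y) div m = j'" using assms(2) by simp
  ultimately show ?thesis using assms(3) by auto
qed

theorem mainTheorem12:
  fixes V :: "'a set" and E :: "'a \<Rightarrow> 'a \<Rightarrow> bool" and n r m :: nat
  assumes "simple_graph V E"
    and "n > 0" and "even n"
    and "r \<ge> 1" and "regular V E (2 * r)"
    and "card V = m"
    and "chromatic_number V E = 3"
    and "\<exists>c. proper_coloring V E c 3 \<and>
           (\<forall>v\<in>V. \<exists>a b. a \<noteq> b
              \<and> nbhd V E v = {u \<in> nbhd V E v. c u = a} \<union> {u \<in> nbhd V E v. c u = b}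
              \<and> card {u \<in> nbhd V E v. c u = a} = r
              \<and> card {u \<in> nbhd V E v. c u = b} = r)"
  shows "chi_ld (lex_V V (empty_V n)) (lex_E E empty_E) = 3"
proof -
  let ?V = "lex_V V (empty_V n)" and ?E = "lex_E E empty_E"
  have finV: "finite V" using assms(1) by (simp add: simple_graph_def)
  have inV: "\<And>u v. E u v \<Longrightarrow> u \<in> V \<and> v \<in> V" using assms(1) by (simp add: simple_graph_def)
  obtain c where pc: "proper_coloring V E c 3" and nb: "\<forall>v\<in>V. \<exists>a b. a \<noteq> b
              \<and> nbhd V E v = {u \<in> nbhd V E v. c u = a} \<union> {u \<in> nbhd V E v. c u = b}
              \<and> card {u \<in> nbhd V E v. c u = a} = r
              \<and> card {u \<in> nbhd V E v. c u = b} = r" using assms(8) by blast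
  have c3: "\<forall>u\<in>V. c u < 3" using pc by (simp add: proper_coloring_def)
  have cE: "\<And>u v. E u v \<Longrightarrow> c u \<noteq> c v" using pc by (simp add: proper_coloring_def)
  have Vne: "V \<noteq> {}"
  proof
    assume "V = {}"
    hence "proper_coloring V E (\<lambda>_. 0) 0" using inV by (auto simp: proper_coloring_def)
    hence "chromatic_number V E \<le> 0" unfolding chromatic_number_def by - (rule Least_le, blast)
    with assms(7) show False by simp
  qed
  then obtain v0 where v0: "v0 \<in> V" by blast
  from nb v0 obtain a b where ab: "a \<noteq> b" and ca: "card {u \<in> nbhd V E v0. c u = a} = r"
    and cb: "card {u \<in> nbhd V E v0. c u = b} = r" by blast
  have "{u \<in> nbhd V E v0. c u = a} \<noteq> {}" "{u \<in> nbhd V E v0. c u = b} \<noteq> {}"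
    using ca cb assms(4) by (metis card.empty not_one_le_zero)+
  then obtain ua ub where ua: "ua \<in> nbhd V E v0" "c ua = a" and ub: "ub \<in> nbhd V E v0" "c ub = b"
    by blast
  have Ea: "E v0 ua" and Eb: "E v0 ub" using ua ub by (auto simp: nbhd_def)
  have d1: "c v0 \<noteq> a" "c v0 \<noteq> b" using cE[OF Ea] cE[OF Eb] ua ub by auto
  have d2: "a < 3" "b < 3" "c v0 < 3" using c3 inV[OF Ea] inV[OF Eb] ua ub by auto
  define cls where "cls i = {u\<in>V. c u = i}" for i
  define A where "A i = card (cls i)" for i
  have fincls: "finite (cls i)" for i using finV by (simp add: cls_def)
  have allc: "cls i \<noteq> {}" if "i < 3" for i
  proof -
    have "i = a \<or> i = b \<or> i = c v0" using that d1 d2 ab by arith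
    thus ?thesis using inV[OF Ea] inV[OF Eb] ua ub v0 by (auto simp: cls_def)
  qed
  have Apos: "A i \<ge> 1" if "i < 3" for i
    using allc[OF that] fincls[of i] by (simp add: A_def Suc_le_eq card_gt_0_iff)
  have Vu: "V = cls 0 \<union> cls 1 \<union> cls 2"
  proof -
    have "c u = 0 \<or> c u = 1 \<or> c u = 2" if "u \<in> V" for u using c3 that by force
    thus ?thesis by (auto simp: cls_def)
  qed
  have cardV: "m = A 0 + A 1 + A 2"
  proof -
    have "card V = card (cls 0 \<union> cls 1) + card (cls 2)"
      unfolding Vu by (rule card_Un_disjoint) (auto simp: cls_def finV)
    also have "card (cls 0 \<union> cls 1) = A 0 + A 1" unfolding A_def
      by (rule card_Un_disjoint) (auto simp: cls_def finV)
    finally show ?thesis using assms(6) by (simp add: A_def)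
  qed
  have "\<forall>i. \<exists>g. bij_betw g (cls i) {0..<A i}"
    using ex_bij_betw_finite_nat fincls unfolding A_def by blast
  hence "\<exists>e. \<forall>i. bij_betw (e i) (cls i) {0..<A i}" by (rule choice)
  then obtain e where e: "\<forall>i. bij_betw (e i) (cls i) {0..<A i}" by blast
  define os where "os (i::nat) = (if i = 0 then 0 else if i = 1 then A 0 else A 0 + A 1)" for i
  define ot where "ot (i::nat) = (if i = 0 then 0 else if i = 1 then A 0 + A 2 else A 0)" for i
  define \<sigma> where "\<sigma> u = os (c u) + e (c u) u" for u
  define \<tau> where "\<tau> u = ot (c u) + e (c u) u" for u
  have c012: "c u \<in> {0,1,2}" if "u \<in> V" for u using c3 that by force
  have sbij: "bij_betw \<sigma> V {0..<m}"
    unfolding \<sigma>_def assms(6)[symmetric]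
  proof (rule block_bij[OF finV])
    show "\<forall>i. bij_betw (e i) {u \<in> V. c u = i} {0..<card {u \<in> V. c u = i}}"
      using e by (simp add: cls_def A_def)
    show "\<forall>u\<in>V. os (c u) + card {w \<in> V. c w = c u} \<le> card V"
    proof
      fix u assume "u \<in> V"
      then have "c u = 0 \<or> c u = 1 \<or> c u = 2" using c012 by auto
      then show "os (c u) + card {w \<in> V. c w = c u} \<le> card V"
      proof -
        have "card {w \<in> V. c w = c u} = A (c u)" by (simp add: A_def cls_def)
        moreover have "os (c u) + A (c u) \<le> m" using \<open>c u = 0 \<or> c u = 1 \<or> c u = 2\<close> cardV
          by (elim disjE) (simp_all add: os_def)
        ultimately show ?thesis using assms(6) by simp
      qed
    qed
    show "\<forall>u\<in>V. \<forall>u'\<in>V. \<forall>x y. x < card {w \<in> V. c w = c u} \<longrightarrow> y < card {w \<in> V. c w = c u'}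
        \<longrightarrow> os (c u) + x = os (c u') + y \<longrightarrow> c u = c u'"
    proof (intro ballI allI impI)
      fix u u' x y assume "u \<in> V" "u' \<in> V"
        and h: "x < card {w \<in> V. c w = c u}" "y < card {w \<in> V. c w = c u'}"
          "os (c u) + x = os (c u') + y"
      from \<open>u \<in> V\<close> have "c u = 0 \<or> c u = 1 \<or> c u = 2" using c012 by auto
      moreover from \<open>u' \<in> V\<close> have "c u' = 0 \<or> c u' = 1 \<or> c u' = 2" using c012 by auto
      moreover have "x < A (c u)" "y < A (c u')" using h by (simp_all add: A_def cls_def)
      ultimately show "c u = c u'" using h(3) by (elim disjE) (simp_all add: os_def)
    qed
  qed
  have tbij: "bij_betw \<tau> V {0..<m}"
    unfolding \<tau>_def assms(6)[symmetric]
  proof (rule block_bij[OF finV])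
    show "\<forall>i. bij_betw (e i) {u \<in> V. c u = i} {0..<card {u \<in> V. c u = i}}"
      using e by (simp add: cls_def A_def)
    show "\<forall>u\<in>V. ot (c u) + card {w \<in> V. c w = c u} \<le> card V"
    proof
      fix u assume "u \<in> V"
      then have "c u = 0 \<or> c u = 1 \<or> c u = 2" using c012 by auto
      then show "ot (c u) + card {w \<in> V. c w = c u} \<le> card V"
      proof -
        have "card {w \<in> V. c w = c u} = A (c u)" by (simp add: A_def cls_def)
        moreover have "ot (c u) + A (c u) \<le> m" using \<open>c u = 0 \<or> c u = 1 \<or> c u = 2\<close> cardV
          by (elim disjE) (simp_all add: ot_def)
        ultimately show ?thesis using assms(6) by simp
      qed
    qed
    show "\<forall>u\<in>V. \<forall>u'\<in>V. \<forall>x y. x < card {w \<in> V. c w = c u} \<longrightarrow> y < card {w \<in> V. c w = c u'}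
        \<longrightarrow> ot (c u) + x = ot (c u') + y \<longrightarrow> c u = c u'"
    proof (intro ballI allI impI)
      fix u u' x y assume "u \<in> V" "u' \<in> V"
        and h: "x < card {w \<in> V. c w = c u}" "y < card {w \<in> V. c w = c u'}"
          "ot (c u) + x = ot (c u') + y"
      from \<open>u \<in> V\<close> have "c u = 0 \<or> c u = 1 \<or> c u = 2" using c012 by auto
      moreover from \<open>u' \<in> V\<close> have "c u' = 0 \<or> c u' = 1 \<or> c u' = 2" using c012 by auto
      moreover have "x < A (c u)" "y < A (c u')" using h by (simp_all add: A_def cls_def)
      ultimately show "c u = c u'" using h(3) by (elim disjE) (simp_all add: ot_def)
    qed
  qed
  have mpos: "m \<ge> 1" using cardV Apos[of 0] by simp
  have slt: "\<sigma> u < m" if "u \<in> V" for u using sbij that by (auto simp: bij_betw_def)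
  have tlt: "\<tau> u < m" if "u \<in> V" for u using tbij that by (auto simp: bij_betw_def)
  have sinj: "inj_on \<sigma> V" using sbij by (simp add: bij_betw_def)
  have tinj: "inj_on \<tau> V" using tbij by (simp add: bij_betw_def)
  define h where "h u j = (if even j then \<sigma> u else if j = 1 then m - 1 - \<tau> u else m - 1 - \<sigma> u)"
    for u and j :: nat
  have hlt: "h u j < m" if "u \<in> V" for u j using slt[OF that] tlt[OF that] mpos by (auto simp: h_def)
  define f where "f = (\<lambda>(u,j). j*m + h u j + 1)"
  have Vp: "?V = V \<times> {0..<n}" by (simp add: lex_V_def empty_V_def)
  have finVp: "finite ?V" using Vp finV by simp
  have cardVp: "card ?V = m*n" using Vp assms(6) by (simp add: card_cartesian_product)
  have finj: "inj_on f ?V"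
  proof (rule inj_onI)
    fix p q assume p: "p \<in> ?V" and q: "q \<in> ?V" and eq: "f p = f q"
    obtain u j where pu: "p = (u,j)" by (cases p)
    obtain u' j' where qu: "q = (u',j')" by (cases q)
    have uV: "u \<in> V" "u' \<in> V" using p q pu qu Vp by auto
    have "j*m + h u j = j'*m + h u' j'" using eq pu qu by (simp add: f_def)
    then have jj: "j = j'" and hh: "h u j = h u' j" using divlem[OF hlt[OF uV(1)] hlt[OF uV(2)]] by auto
    have "u = u'"
    proof (cases "even j")
      case True thus ?thesis using hh sinj uV by (simp add: h_def inj_on_def)
    next
      case False
      show ?thesis
      proof (cases "j = 1")
        case True
        with False hh have "m - 1 - \<tau> u = m - 1 - \<tau> u'" by (simp add: h_def)
        hence "\<tau> u = \<tau> u'" using tlt[OF uV(1)] tlt[OF uV(2)] by linarith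
        thus ?thesis using tinj uV by (meson inj_onD)
      next
        case F2: False
        with False hh have "m - 1 - \<sigma> u = m - 1 - \<sigma> u'" by (simp add: h_def)
        hence "\<sigma> u = \<sigma> u'" using slt[OF uV(1)] slt[OF uV(2)] by linarith
        thus ?thesis using sinj uV by (meson inj_onD)
      qed
    qed
    thus "p = q" using pu qu jj by simp
  qed
  have fimg: "f ` ?V \<subseteq> {1..m*n}"
  proof
    fix x assume "x \<in> f ` ?V"
    then obtain u j where uj: "u \<in> V" "j < n" "x = f (u,j)" using Vp by auto
    have "j*m + h u j + 1 \<le> j*m + m" using hlt[OF uj(1), of j] by simp
    also have "\<dots> = (j+1)*m" by simp
    also have "\<dots> \<le> n*m" using uj(2) by (intro mult_le_mono1) simp
    finally show "x \<in> {1..m*n}" using uj(3) by (simp add: f_def mult.commute)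
  qed
  have fbij: "bij_betw f ?V {1..card ?V}"
  proof -
    have "card (f ` ?V) = card {1..card ?V}" using card_image[OF finj] by simp
    hence "f ` ?V = {1..card ?V}" using fimg cardVp by (simp add: card_subset_eq)
    thus ?thesis using finj by (simp add: bij_betw_def)
  qed
  define d where "d k = int (os k) - int (ot k)" for k
  have sd: "int (\<sigma> u) - int (\<tau> u) = d (c u)" for u by (simp add: \<sigma>_def \<tau>_def d_def)
  have hsum: "(\<Sum>j\<in>{0..<2*k}. int (h u j)) = int k * (int m - 1) + int (\<sigma> u) - int (\<tau> u)"
    if "u \<in> V" "k \<ge> 1" for u k
    using that(2)
  proof (induct k rule: nat_induct_at_least)
    case base
    have "int (m - 1 - \<tau> u) = int m - 1 - int (\<tau> u)" using tlt[OF that(1)] by linarith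
    thus ?case by (simp add: h_def numeral_2_eq_2)
  next
    case (Suc k)
    have e2: "2 * Suc k = Suc (Suc (2*k))" by simp
    have "int (m - 1 - \<sigma> u) = int m - 1 - int (\<sigma> u)" using slt[OF that(1)] by linarith
    thus ?case using Suc by (simp add: e2 h_def algebra_simps)
  qed
  define C where "C = (\<Sum>j\<in>{0..<n}. int (j*m+1)) + int (n div 2) * (int m - 1)"
  have Sf: "int (\<Sum>j\<in>{0..<n}. f (u,j)) = C + d (c u)" if "u \<in> V" for u
  proof -
    have n2: "n = 2 * (n div 2)" "n div 2 \<ge> 1" using assms(2,3) by auto
    have "int (\<Sum>j\<in>{0..<n}. f (u,j)) = (\<Sum>j\<in>{0..<n}. int (j*m+1) + int (h u j))"
      by (simp add: f_def algebra_simps)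
    also have "\<dots> = (\<Sum>j\<in>{0..<n}. int (j*m+1)) + (\<Sum>j\<in>{0..<n}. int (h u j))" by (rule sum.distrib)
    also have "(\<Sum>j\<in>{0..<n}. int (h u j)) = int (n div 2) * (int m - 1) + int (\<sigma> u) - int (\<tau> u)"
      using hsum[OF that n2(2)] n2(1) by metis
    finally show ?thesis using sd[of u] by (simp add: C_def)
  qed
  define D where "D = d 0 + d 1 + d 2"
  define Wc where "Wc k = int r * (2*C + D - d k)" for k
  have wt: "int (weight ?V ?E f (v,i)) = Wc (c v)" if "v \<in> V" for v i
  proof -
    from nb that obtain a b where ab: "a \<noteq> b"
      and Nv: "nbhd V E v = {u \<in> nbhd V E v. c u = a} \<union> {u \<in> nbhd V E v. c u = b}"
      and ca: "card {u \<in> nbhd V E v. c u = a} = r" and cb: "card {u \<in> nbhd V E v. c u = b} = r"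
      by blast
    let ?A = "{u \<in> nbhd V E v. c u = a}" and ?B = "{u \<in> nbhd V E v. c u = b}"
    have finN: "finite (nbhd V E v)" using finV by (simp add: nbhd_def)
    have NV: "\<And>u. u \<in> nbhd V E v \<Longrightarrow> u \<in> V \<and> E v u" by (simp add: nbhd_def)
    have "?A \<noteq> {}" "?B \<noteq> {}"
      using ca cb assms(4) by (metis card.empty not_one_le_zero)+
    then obtain ua ub where ua: "ua \<in> nbhd V E v" "c ua = a" and ub: "ub \<in> nbhd V E v" "c ub = b"
      by blast
    have Ea: "E v ua" and Eb: "E v ub" using ua ub by (auto simp: nbhd_def)
    have d1: "c v \<noteq> a" "c v \<noteq> b" using cE[OF Ea] cE[OF Eb] ua ub by auto
    have d2: "a < 3" "b < 3" "c v < 3" using c3 inV[OF Ea] inV[OF Eb] ua ub by auto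
    have Dabc: "d a + d b + d (c v) = D"
    proof -
      have "a = 0 \<or> a = 1 \<or> a = 2" "b = 0 \<or> b = 1 \<or> b = 2" "c v = 0 \<or> c v = 1 \<or> c v = 2"
        using d2 by auto
      thus ?thesis using d1 ab unfolding D_def by (elim disjE) simp_all
    qed
    let ?g = "\<lambda>u. C + d (c u)"
    have "int (weight ?V ?E f (v,i)) = (\<Sum>u\<in>nbhd V E v. int (\<Sum>j\<in>{0..<n}. f (u,j)))"
      by (simp add: weight_lex of_nat_sum)
    also have "\<dots> = sum ?g (nbhd V E v)" using Sf NV by (intro sum.cong) auto
    also have "\<dots> = sum ?g (?A \<union> ?B)" using Nv by (rule arg_cong[where f="sum ?g"])
    also have "\<dots> = sum ?g ?A + sum ?g ?B"
      by (rule sum.union_disjoint) (use finN ab in auto)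
    also have "sum ?g ?A = sum (\<lambda>_. C + d a) ?A" by (rule sum.cong) auto
    also have "\<dots> = int r * (C + d a)" using ca by simp
    also have "sum ?g ?B = sum (\<lambda>_. C + d b) ?B" by (rule sum.cong) auto
    also have "\<dots> = int r * (C + d b)" using cb by simp
    finally show ?thesis unfolding Wc_def Dabc[symmetric] by (simp add: algebra_simps)
  qed
  have dd: "d 0 = 0" "d 1 = - int (A 2)" "d 2 = int (A 1)" by (simp_all add: d_def os_def ot_def)
  have Wc_inj: "Wc i \<noteq> Wc j" if "i < 3" "j < 3" "i \<noteq> j" for i j
  proof
    assume "Wc i = Wc j"
    hence dij: "d i = d j" using assms(4) by (simp add: Wc_def)
    have "i = 0 \<or> i = 1 \<or> i = 2" "j = 0 \<or> j = 1 \<or> j = 2" using that by auto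
    thus False using dij that(3) Apos[of 1] Apos[of 2] dd by (elim disjE) simp_all
  qed
  have ld: "ld_antimagic ?V ?E f"
    unfolding ld_antimagic_def
  proof (intro conjI allI impI)
    show "bij_betw f ?V {1..card ?V}" by (rule fbij)
    fix p q assume pq: "?E p q"
    obtain u i where p: "p = (u,i)" by (cases p)
    obtain v j where q: "q = (v,j)" by (cases q)
    have "E u v" using pq p q by (simp add: lex_E_def empty_E_def)
    then have uv: "u \<in> V" "v \<in> V" "c u \<noteq> c v" using inV cE by auto
    have "Wc (c u) \<noteq> Wc (c v)" using Wc_inj c3 uv by auto
    thus "weight ?V ?E f p \<noteq> weight ?V ?E f q" using wt[OF uv(1), of i] wt[OF uv(2), of j] p q
      by auto
  qed
  have le3: "card (weight ?V ?E f ` ?V) \<le> 3"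
  proof -
    have "weight ?V ?E f ` ?V \<subseteq> (\<lambda>k. nat (Wc k)) ` {0,1,2}"
    proof
      fix x assume "x \<in> weight ?V ?E f ` ?V"
      then obtain v i where vi: "v \<in> V" "x = weight ?V ?E f (v,i)" using Vp by auto
      then have "x = nat (Wc (c v))" using wt by (metis nat_int)
      thus "x \<in> (\<lambda>k. nat (Wc k)) ` {0,1,2}" using c012 vi(1) by blast
    qed
    hence "card (weight ?V ?E f ` ?V) \<le> card ((\<lambda>k. nat (Wc k)) ` {0,1,2::nat})"
      by (rule card_mono[rotated]) simp
    also have "\<dots> \<le> card {0,1,2::nat}" by (rule card_image_le) simp
    finally show ?thesis by simp
  qed
  have ge3: "3 \<le> card (weight ?V ?E g ` ?V)" if "ld_antimagic ?V ?E g" for g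
    using lower_bound[OF assms(1) assms(2) that] assms(7) by simp
  let ?S = "{card (weight ?V ?E g ` ?V) | g. ld_antimagic ?V ?E g}"
  show ?thesis
    unfolding chi_ld_def
  proof (rule Min_eqI)
    have "?S \<subseteq> {..card ?V}" using card_image_le finVp by auto
    thus "finite ?S" by (rule finite_subset) simp
    show "\<And>y. y \<in> ?S \<Longrightarrow> 3 \<le> y" using ge3 by auto
    have "card (weight ?V ?E f ` ?V) = 3" using le3 ge3[OF ld] by simp
    thus "3 \<in> ?S" using ld by (metis (mono_tags, lifting) mem_Collect_eq)
  qed
qed

end
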